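(* Let $F$ be a weighted graph with edge weight $\omega:E(F)\to\{3,4,5\}$. Assume that $F=T\cup P$, where $T$ is a spanning tree of $F$ all of whose edges have weight $3$ and $P$ is a non-spanning path of weight $\ell$ with end-vertices $x$ and $y$. If $F$ has no cycle of weight $11$ and $P$ has minimal weight among all $x,y$-paths in $F[N^1_F[P]]$, then $|N^1_F[P]|\ge\frac{\ell}{3}+\frac{5}{3}$.
   Context: The weight of a subgraph is the sum of the weights of its edges. $N^1_F[P]$ is the closed neighbourhood of $V(P)$ in $F$: all vertices at distance at most $1$ in $F$ from some vertex of $P$. A path is non-spanning if it does not contain all vertices of $F$. *)

theory Defs
  imports Complex_Main
begin

definition simple_graph :: "'a set \<Rightarrow> 'a set set \<Rightarrow> bool" where
  "simple_graph V E \<longleftrightarrow> finite V \<and>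
     (\<forall>e\<in>E. \<exists>u v. u \<noteq> v \<and> u \<in> V \<and> v \<in> V \<and> e = {u, v})"

definition path_edges :: "'a list \<Rightarrow> 'a set set" where
  "path_edges ps = set (map (\<lambda>(a, b). {a, b}) (zip ps (tl ps)))"

definition is_path :: "'a set \<Rightarrow> 'a set set \<Rightarrow> 'a list \<Rightarrow> bool" where
  "is_path V E ps \<longleftrightarrow> ps \<noteq> [] \<and> distinct ps \<and> set ps \<subseteq> V \<and> path_edges ps \<subseteq> E"

definition is_cycle :: "'a set \<Rightarrow> 'a set set \<Rightarrow> 'a list \<Rightarrow> bool" where
  "is_cycle V E cs \<longleftrightarrow> length cs \<ge> 3 \<and> is_path V E cs \<and> {last cs, hd cs} \<in> E"

definition cycle_edges :: "'a list \<Rightarrow> 'a set set" where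
  "cycle_edges cs = insert {last cs, hd cs} (path_edges cs)"

definition weight :: "('a set \<Rightarrow> nat) \<Rightarrow> 'a set set \<Rightarrow> nat" where
  "weight w A = (\<Sum>e\<in>A. w e)"

definition connected_graph :: "'a set \<Rightarrow> 'a set set \<Rightarrow> bool" where
  "connected_graph V E \<longleftrightarrow>
     (\<forall>u\<in>V. \<forall>v\<in>V. \<exists>ps. is_path V E ps \<and> hd ps = u \<and> last ps = v)"

definition is_tree :: "'a set \<Rightarrow> 'a set set \<Rightarrow> bool" where
  "is_tree V E \<longleftrightarrow> simple_graph V E \<and> connected_graph V E \<and> (\<nexists>cs. is_cycle V E cs)"

definition spanning_tree :: "'a set \<Rightarrow> 'a set set \<Rightarrow> 'a set set \<Rightarrow> bool" where
  "spanning_tree V E ET \<longleftrightarrow> ET \<subseteq> E \<and> is_tree V ET"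

definition closed_nbhd :: "'a set \<Rightarrow> 'a set set \<Rightarrow> 'a set \<Rightarrow> 'a set" where
  "closed_nbhd V E S = S \<union> {v\<in>V. \<exists>u\<in>S. {u, v} \<in> E}"

definition induced_edges :: "'a set set \<Rightarrow> 'a set \<Rightarrow> 'a set set" where
  "induced_edges E S = {e\<in>E. e \<subseteq> S}"

end

theory Submission
  imports Defs
begin


fun pw :: "('a set \<Rightarrow> nat) \<Rightarrow> 'a list \<Rightarrow> nat" where
  "pw w (a # b # r) = w {a,b} + pw w (b # r)"
| "pw w _ = 0"

lemma pe_Cons2: "path_edges (a # b # r) = insert {a,b} (path_edges (b # r))"
  by (simp add: path_edges_def)

lemma pe_short: "path_edges [] = {}" "path_edges [a] = {}"
  by (simp_all add: path_edges_def)

lemma pe_sub: "e \<in> path_edges ps \<Longrightarrow> e \<subseteq> set ps"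
proof (induct ps rule: induct_list012)
  case (3 x y zs) then show ?case by (auto simp: pe_Cons2)
qed (auto simp: pe_short)

lemma pe_finite: "finite (path_edges ps)"
  by (simp add: path_edges_def)

lemma weight_pw: "distinct ps \<Longrightarrow> weight w (path_edges ps) = pw w ps"
proof (induct ps rule: induct_list012)
  case (3 x y zs)
  have "{x,y} \<notin> path_edges (y # zs)" using 3(3) pe_sub by fastforce
  then show ?case using 3 by (simp add: pe_Cons2 weight_def pe_finite)
qed (auto simp: pe_short weight_def)

lemma pw_append: "xs \<noteq> [] \<Longrightarrow> ys \<noteq> [] \<Longrightarrow> pw w (xs @ ys) = pw w xs + w {last xs, hd ys} + pw w ys"
proof (induct xs)
  case Nil then show ?case by simp
next
  case (Cons a xs)
  show ?case
  proof (cases xs)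
    case Nil then show ?thesis using Cons by (cases ys) auto
  next
    case (Cons b r) then show ?thesis using Cons.hyps Cons.prems by auto
  qed
qed

lemma pe_append: "xs \<noteq> [] \<Longrightarrow> ys \<noteq> [] \<Longrightarrow> path_edges (xs @ ys) = path_edges xs \<union> {{last xs, hd ys}} \<union> path_edges ys"
proof (induct xs)
  case Nil then show ?case by simp
next
  case (Cons a xs)
  show ?case
  proof (cases xs)
    case Nil then show ?thesis using Cons by (cases ys) (auto simp: pe_Cons2 pe_short)
  next
    case (Cons b r) then show ?thesis using Cons.hyps Cons.prems by (auto simp: pe_Cons2)
  qed
qed

lemma pw_index: "pw w ps = (\<Sum>t < length ps - 1. w {ps!t, ps!Suc t})"
proof (induct ps rule: induct_list012)
  case (3 x y zs)
  then show ?case by (simp add: sum.lessThan_Suc_shift del: sum.lessThan_Suc)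
qed auto

lemma pe_nth: "Suc t < length ps \<Longrightarrow> {ps!t, ps!Suc t} \<in> path_edges ps"
  unfolding path_edges_def by (force simp: in_set_zip nth_tl)

lemma crossing: "xs \<noteq> [] \<Longrightarrow> hd xs \<in> S \<Longrightarrow> last xs \<notin> S \<Longrightarrow> \<exists>a b. a \<in> S \<and> b \<notin> S \<and> {a,b} \<in> path_edges xs"
proof (induct xs)
  case Nil then show ?case by simp
next
  case (Cons a xs)
  show ?case
  proof (cases xs)
    case Nil then show ?thesis using Cons by simp
  next
    case (Cons b r)
    show ?thesis
    proof (cases "b \<in> S")
      case True
      have "xs \<noteq> []" "hd xs \<in> S" "last xs \<notin> S" using Cons True Cons.prems by auto
      then obtain a' b' where "a' \<in> S" "b' \<notin> S" "{a',b'} \<in> path_edges xs"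
        using Cons.hyps by blast
      then show ?thesis using Cons by (auto simp: pe_Cons2)
    next
      case False then show ?thesis using Cons.prems Cons by (auto simp: pe_Cons2)
    qed
  qed
qed

lemma ivt: "f 0 = (0::nat) \<Longrightarrow> (\<forall>p<n. f (Suc p) \<le> Suc (f p)) \<Longrightarrow> c \<le> f n \<Longrightarrow> \<exists>p\<le>n. f p = c"
proof (induct n)
  case 0 then show ?case by auto
next
  case (Suc n)
  show ?case
  proof (cases "c \<le> f n")
    case True
    have "\<forall>p<n. f (Suc p) \<le> Suc (f p)" using Suc.prems(2) by auto
    then obtain p where "p \<le> n" "f p = c" using Suc.hyps Suc.prems(1) True by blast
    then show ?thesis by (intro exI[of _ p]) auto
  next
    case False
    have "f (Suc n) \<le> Suc (f n)" using Suc.prems(2) by auto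
    then have "c = f (Suc n)" using Suc.prems(3) False by linarith
    then show ?thesis by auto
  qed
qed



theorem lemma5p1:
  fixes V :: "'a set" and E ET :: "'a set set" and w :: "'a set \<Rightarrow> nat"
    and ps :: "'a list" and x y :: 'a and l :: nat
  assumes "simple_graph V E"
    and "\<forall>e\<in>E. w e \<in> {3, 4, 5}"
    and "spanning_tree V E ET"
    and "\<forall>e\<in>ET. w e = 3"
    and "is_path V E ps"
    and "E = ET \<union> path_edges ps"
    and "set ps \<noteq> V"
    and "hd ps = x" and "last ps = y"
    and "l = weight w (path_edges ps)"
    and "\<forall>cs. is_cycle V E cs \<longrightarrow> weight w (cycle_edges cs) \<noteq> 11"
    and "\<forall>qs. is_path (closed_nbhd V E (set ps))
                      (induced_edges E (closed_nbhd V E (set ps))) qs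
                \<and> hd qs = x \<and> last qs = y
              \<longrightarrow> l \<le> weight w (path_edges qs)"
  shows "real (card (closed_nbhd V E (set ps))) \<ge> real l / 3 + 5 / 3"
proof -
  have finV: "finite V" using assms(1) unfolding simple_graph_def by auto
  have EV: "a \<in> V \<and> b \<in> V \<and> a \<noteq> b" if ab: "{a,b} \<in> E" for a b
  proof -
    have H: "\<forall>e\<in>E. \<exists>u v. u \<noteq> v \<and> u \<in> V \<and> v \<in> V \<and> e = {u, v}"
      using assms(1) unfolding simple_graph_def by simp
    obtain u v where "u \<noteq> v" "u \<in> V" "v \<in> V" "{a,b} = {u,v}"
      using bspec[OF H ab] by auto
    then show ?thesis by (auto simp: doubleton_eq_iff)
  qed
  have psne: "ps \<noteq> []" and dps: "distinct ps" and psV: "set ps \<subseteq> V" and peE: "path_edges ps \<subseteq> E"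
    using assms(5) unfolding is_path_def by auto
  have ETE: "ET \<subseteq> E" and conn: "connected_graph V ET"
    using assms(3) unfolding spanning_tree_def is_tree_def by auto
  define k where "k = length ps - 1"
  have lenps: "length ps = Suc k" using psne k_def by (cases ps) auto
  define we where "we t = w {ps!t, ps!Suc t}" for t
  have pek: "{ps!t, ps!Suc t} \<in> path_edges ps" if "t < k" for t
    using pe_nth[of t ps] that lenps psne by auto
  have we345: "we t \<in> {3,4,5}" if "t < k" for t
    using assms(2) pek[OF that] peE unfolding we_def by auto
  have we3: "we t \<ge> 3" if "t < k" for t using we345[OF that] by auto
  have w3: "w e = 3" if "e \<in> E" "e \<notin> path_edges ps" for e
    using assms(4,6) that by auto
  have lsum: "l = (\<Sum>t<k. we t)"
    using assms(10) weight_pw[OF dps, of w] pw_index[of w ps] lenps unfolding we_def by simp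
  define NB where "NB = closed_nbhd V E (set ps)"
  define GE where "GE = induced_edges E NB"
  have psNB: "set ps \<subseteq> NB" unfolding NB_def closed_nbhd_def by auto
  have NBV: "NB \<subseteq> V" unfolding NB_def closed_nbhd_def using psV by auto
  have finNB: "finite NB" using NBV finV finite_subset by auto
  have inNB: "b \<in> NB" if "a \<in> set ps" "{a,b} \<in> E" for a b
    using that EV[OF that(2)] unfolding NB_def closed_nbhd_def by auto
  have shortc: "l \<le> weight w (path_edges qs)" if "is_path NB GE qs" "hd qs = x" "last qs = y" for qs
    using assms(12) that unfolding NB_def GE_def by blast
  define S where "S a b = (\<Sum>t\<in>{a..<b}. we t)" for a b
  have Sge: "S a b \<ge> 3 * (b - a)" if "b \<le> k" for a b
  proof -
    have "(\<Sum>t\<in>{a..<b}. (3::nat)) \<le> S a b" unfolding S_def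
      by (rule sum_mono) (use we3 that in auto)
    then show ?thesis by simp
  qed
  have Ssplit: "l = S 0 i + S i j + S j k" if "i \<le> j" "j \<le> k" for i j
    unfolding lsum S_def using that
    by (simp add: sum.atLeastLessThan_concat lessThan_atLeast0)
  have pwtake: "pw w (take (Suc i) ps) = S 0 i" if "i \<le> k" for i
    unfolding pw_index S_def we_def using that lenps
    by (auto simp: lessThan_atLeast0 min_def intro!: sum.cong)
  have pwdrop: "pw w (drop j ps) = S j k" if "j \<le> k" for j
  proof -
    have "pw w (drop j ps) = (\<Sum>t<k-j. we (t+j))"
      unfolding pw_index we_def using that lenps by (auto simp: add.commute intro!: sum.cong)
    also have "\<dots> = S j k" unfolding S_def using that
      using sum.shift_bounds_nat_ivl[of we 0 j "k-j"] by (simp add: lessThan_atLeast0)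
    finally show ?thesis .
  qed
  have gen: "S i j \<le> c" if "i < j" "j \<le> k" "is_path NB GE qs" "hd qs = x" "last qs = y"
     "pw w qs = S 0 i + c + S j k" for i j c qs
  proof -
    have "distinct qs" using that(3) unfolding is_path_def by auto
    then have "l \<le> pw w qs" using shortc[OF that(3-5)] weight_pw by metis
    then show ?thesis using that Ssplit[of i j] by simp
  qed
  have peps_sub: "path_edges xs \<subseteq> path_edges ps" "path_edges ys \<subseteq> path_edges ps"
    if "ps = xs @ ys" "xs \<noteq> []" "ys \<noteq> []" for xs ys
    using pe_append[OF that(2,3)] that(1) by auto
  have pe_take: "path_edges (take (Suc i) ps) \<subseteq> path_edges ps" if "i < k" for i
    using peps_sub(1)[of "take (Suc i) ps" "drop (Suc i) ps"] that lenps psne by auto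
  have pe_drop: "path_edges (drop j ps) \<subseteq> path_edges ps" if "0 < j" "j \<le> k" for j
    using peps_sub(2)[of "take j ps" "drop j ps"] that lenps psne by auto
  have peGE: "path_edges ps \<subseteq> GE" unfolding GE_def induced_edges_def using peE psNB pe_sub by blast
  have lasttake: "last (take (Suc i) ps) = ps ! i" if "i \<le> k" for i
    using that lenps by (simp add: take_Suc_conv_app_nth)
  have hddrop: "hd (drop j ps) = ps ! j" if "j \<le> k" for j
    using that lenps by (simp add: hd_drop_conv_nth)
  have SC_chord: "S i j \<le> w {ps!i, ps!j}" if "i < j" "j \<le> k" "{ps!i, ps!j} \<in> E" for i j
  proof -
    define qs where "qs = take (Suc i) ps @ drop j ps"
    have ne: "take (Suc i) ps \<noteq> []" "drop j ps \<noteq> []" using that lenps psne by auto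
    have "path_edges qs = path_edges (take (Suc i) ps) \<union> {{ps!i, ps!j}} \<union> path_edges (drop j ps)"
      unfolding qs_def using pe_append[OF ne] lasttake hddrop that by auto
    moreover have "{ps!i, ps!j} \<in> GE" unfolding GE_def induced_edges_def using that psNB lenps by auto
    moreover have "path_edges (take (Suc i) ps) \<subseteq> GE" using pe_take[of i] peGE that(1,2) by auto
    moreover have "path_edges (drop j ps) \<subseteq> GE" using pe_drop[of j] peGE that(1,2) by auto
    ultimately have "path_edges qs \<subseteq> GE" by simp
    moreover have "distinct qs" unfolding qs_def using dps that
      by (auto simp: set_take_disj_set_drop_if_distinct)
    moreover have "set qs \<subseteq> NB" unfolding qs_def using psNB
      by (auto dest: in_set_takeD in_set_dropD)
    ultimately have "is_path NB GE qs" unfolding is_path_def qs_def using ne by auto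
    moreover have "hd qs = x" "last qs = y" unfolding qs_def using assms(8,9) ne that lenps psne by auto
    moreover have "pw w qs = S 0 i + w {ps!i, ps!j} + S j k"
      unfolding qs_def using pw_append[OF ne] lasttake hddrop pwtake pwdrop that by auto
    ultimately show ?thesis using gen that by blast
  qed
  have SC_z: "S i j \<le> 6" if "i < j" "j \<le> k" "z \<notin> set ps" "{z, ps!i} \<in> E" "{z, ps!j} \<in> E" for i j z
  proof -
    define qs where "qs = take (Suc i) ps @ z # drop j ps"
    have ne: "take (Suc i) ps \<noteq> []" "drop j ps \<noteq> []" using that lenps psne by auto
    have ne2: "z # drop j ps \<noteq> []" by simp
    have zNB: "z \<in> NB" using inNB[of "ps!i" z] that lenps by (auto simp: insert_commute)
    have wz: "w {z, ps!i} = 3" "w {z, ps!j} = 3" using w3 that pe_sub by blast+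
    have "path_edges (z # drop j ps) = insert {z, ps!j} (path_edges (drop j ps))"
      using ne(2) hddrop[OF that(2)] by (cases "drop j ps") (auto simp: pe_Cons2)
    then have "path_edges qs = path_edges (take (Suc i) ps) \<union> {{ps!i, z}} \<union> insert {z, ps!j} (path_edges (drop j ps))"
      unfolding qs_def using pe_append[OF ne(1) ne2] lasttake that by auto
    moreover have "{ps!i, z} \<in> GE" "{z, ps!j} \<in> GE" unfolding GE_def induced_edges_def
      using that psNB lenps zNB by (auto simp: insert_commute)
    moreover have "path_edges (take (Suc i) ps) \<subseteq> GE" using pe_take[of i] peGE that(1,2) by auto
    moreover have "path_edges (drop j ps) \<subseteq> GE" using pe_drop[of j] peGE that(1,2) by auto
    ultimately have "path_edges qs \<subseteq> GE" by simp
    moreover have "distinct qs" unfolding qs_def using dps that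
      by (auto simp: set_take_disj_set_drop_if_distinct dest: in_set_takeD in_set_dropD)
    moreover have "set qs \<subseteq> NB" unfolding qs_def using psNB zNB
      by (auto dest: in_set_takeD in_set_dropD)
    ultimately have "is_path NB GE qs" unfolding is_path_def qs_def using ne by auto
    moreover have "hd qs = x" "last qs = y" unfolding qs_def using assms(8,9) ne that lenps psne by auto
    moreover have "pw w qs = S 0 i + 6 + S j k"
    proof -
      have "pw w (z # drop j ps) = w {z, ps!j} + S j k"
        using pw_append[of "[z]" "drop j ps" w] ne hddrop pwdrop that by auto
      then show ?thesis
        unfolding qs_def using pw_append[OF ne(1) ne2] lasttake pwtake that wz by (auto simp: insert_commute)
    qed
    ultimately show ?thesis using gen that by blast
  qed
  define linked where "linked t \<longleftrightarrow> (\<exists>z. z \<notin> set ps \<and> {z, ps!t} \<in> E \<and> {z, ps!Suc t} \<in> E)" for t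
  define C where "C = {t. t < k \<and> we t \<ge> 4 \<and> \<not> linked t}"
  define Lk where "Lk = {t. t < k \<and> we t \<ge> 4 \<and> linked t}"
  define cc where "cc p = card (C \<inter> {..<p})" for p
  have finC: "finite C" unfolding C_def by auto
  have ccSuc: "cc (Suc p) = (if p \<in> C then Suc (cc p) else cc p)" for p
    unfolding cc_def using finC by (auto simp: lessThan_Suc Int_insert_right card_insert_if)
  have S1: "S i (Suc i) = we i" for i by (simp add: S_def)
  have S2: "S i (Suc (Suc i)) = we i + we (Suc i)" for i by (simp add: S_def)
  have Stwo: "we i + we j \<le> S i (Suc j)" if "i < j" for i j
  proof -
    have "S i (Suc j) = we i + S (Suc i) (Suc j)" unfolding S_def using that
      by (simp add: sum.atLeast_Suc_lessThan)
    moreover have "S (Suc i) (Suc j) = S (Suc i) j + we j" unfolding S_def using that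
      by (simp add: sum.atLeastLessThan_Suc)
    ultimately show ?thesis by simp
  qed
  have F1: "cc p = cc q" if "p \<le> k" "q \<le> k" "{ps!p, ps!q} \<in> ET" for p q
  proof -
    have key: "cc i = cc j" if "i < j" "j \<le> k" "{ps!i, ps!j} \<in> ET" for i j
    proof -
      have "w {ps!i, ps!j} = 3" using that(3) assms(4) by auto
      then have S3: "S i j \<le> 3" using SC_chord[OF that(1,2)] that(3) ETE by auto
      moreover have "S i j \<ge> 3 * (j - i)" using Sge that by auto
      ultimately have j: "j = Suc i" using that(1) by linarith
      then have "we i \<le> 3" using S3 S1 by simp
      then have "i \<notin> C" unfolding C_def by auto
      then show ?thesis using j ccSuc by simp
    qed
    have "p \<noteq> q" using EV ETE that(3) by force
    show ?thesis
    proof (cases "p < q")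
      case True then show ?thesis using key that by auto
    next
      case False
      then have "q < p" using \<open>p \<noteq> q\<close> by linarith
      moreover have "{ps!q, ps!p} \<in> ET" using that(3) by (simp add: insert_commute)
      ultimately show ?thesis using key[of q p] that by auto
    qed
  qed
  have F2: "cc p = cc q" if "p < q" "q \<le> k" "z \<notin> set ps" "{z, ps!p} \<in> E" "{z, ps!q} \<in> E" for p q z
  proof -
    have S6: "S p q \<le> 6" using SC_z[OF that] .
    have "S p q \<ge> 3*(q-p)" using Sge that by auto
    then have "q = Suc p \<or> q = Suc (Suc p)" using S6 that(1) by linarith
    then show ?thesis
    proof
      assume q: "q = Suc p"
      then have "linked p" unfolding linked_def using that by auto
      then have "p \<notin> C" unfolding C_def by auto
      then show ?thesis using q ccSuc by simp
    next
      assume q: "q = Suc (Suc p)"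
      then have "we p + we (Suc p) \<le> 6" using S6 S2 by simp
      moreover have "we p \<ge> 3" "we (Suc p) \<ge> 3" using we3 q that by auto
      ultimately have "we p = 3" "we (Suc p) = 3" by auto
      then have "p \<notin> C" "Suc p \<notin> C" unfolding C_def by auto
      then show ?thesis using q ccSuc by simp
    qed
  qed
  have F2s: "cc p = cc q" if "p \<le> k" "q \<le> k" "z \<notin> set ps" "{z, ps!p} \<in> E" "{z, ps!q} \<in> E" for p q z
  proof (cases p q rule: linorder_cases)
    case less then show ?thesis using F2 that by blast
  next
    case equal then show ?thesis by simp
  next
    case greater then show ?thesis using F2[of q p z] that by auto
  qed
  have F3: "we t \<le> 4" if "t < k" and lt: "linked t" for t
  proof -
    obtain z where z: "z \<notin> set ps" "{z, ps!t} \<in> E" "{z, ps!Suc t} \<in> E" using lt linked_def by auto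
    define a where "a = ps!t"
    define b where "b = ps!Suc t"
    have z': "{z,a} \<in> E" "{z,b} \<in> E" using z a_def b_def by auto
    have ain: "a \<in> set ps" "b \<in> set ps" using lenps that by (auto simp: a_def b_def)
    have ab: "a \<noteq> b" using dps lenps that by (simp add: a_def b_def nth_eq_iff_index_eq)
    have za: "z \<noteq> a" "z \<noteq> b" using ain z(1) by auto
    have abE: "{a,b} \<in> E" using pek[OF that(1)] peE a_def b_def by auto
    have zV: "z \<in> V" using EV z' by auto
    have cyc: "is_cycle V E [z,a,b]" unfolding is_cycle_def is_path_def
      using z' ain psV ab za abE zV by (auto simp: pe_Cons2 pe_short insert_commute)
    have ce: "cycle_edges [z,a,b] = {{b,z},{z,a},{a,b}}" by (simp add: cycle_edges_def pe_Cons2 pe_short)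
    have wz: "w {z,a} = 3" "w {b,z} = 3"
      using w3[of "{z,a}"] w3[of "{b,z}"] z' pe_sub z(1) by (auto simp: insert_commute)
    have "weight w (cycle_edges [z,a,b]) = 6 + w {a,b}"
      unfolding ce weight_def using za ab wz by (simp add: doubleton_eq_iff)
    then have "w {a,b} \<noteq> 5" using assms(11) cyc by auto
    then show ?thesis using we345[OF that(1)] unfolding we_def a_def b_def by auto
  qed
  define Ou where "Ou = NB - set ps"
  have finO: "finite Ou" using finNB Ou_def by auto
  define h where "h z = (LEAST t. t < k \<and> we t \<ge> 4 \<and> {z, ps!t} \<in> E \<and> {z, ps!Suc t} \<in> E)" for z
  have noTwo: False if "t<t'" "t'<k" "we t \<ge> 4" "we t' \<ge> 4" "z \<notin> set ps" "{z,ps!t} \<in> E" "{z,ps!t'} \<in> E" "{z,ps!Suc t'} \<in> E" for t t' z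
  proof -
    have "S t (Suc t') \<le> 6" using SC_z[of t "Suc t'" z] that by auto
    moreover have "we t + we t' \<le> S t (Suc t')" using Stwo that by auto
    ultimately show False using that by auto
  qed
  have LkO: "Lk \<subseteq> h ` Ou"
  proof
    fix t assume "t \<in> Lk"
    then have t: "t < k" "we t \<ge> 4" "linked t" unfolding Lk_def by auto
    then obtain z where z: "z \<notin> set ps" "{z, ps!t} \<in> E" "{z, ps!Suc t} \<in> E" using linked_def by auto
    have "z \<in> NB" using inNB[of "ps!t" z] z lenps t by (auto simp: insert_commute)
    then have zO: "z \<in> Ou" using z Ou_def by auto
    have "h z = t" unfolding h_def
    proof (rule Least_equality)
      show "t < k \<and> we t \<ge> 4 \<and> {z, ps!t} \<in> E \<and> {z, ps!Suc t} \<in> E" using t z by auto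
    next
      fix t' assume "t' < k \<and> we t' \<ge> 4 \<and> {z, ps!t'} \<in> E \<and> {z, ps!Suc t'} \<in> E"
      then show "t \<le> t'" using noTwo[of t' t z] t z by (cases "t' < t") auto
    qed
    then show "t \<in> h ` Ou" using zO by blast
  qed
  have cardLk: "card Lk \<le> card Ou"
    using card_mono[OF finite_imageI[OF finO] LkO] card_image_le[OF finO, of h] by linarith
  define g where "g z = cc (SOME q. q \<le> k \<and> {z, ps!q} \<in> E)" for z
  have cc0: "cc 0 = 0" unfolding cc_def by simp
  have cck: "cc k = card C" unfolding cc_def C_def by (simp add: Int_absorb2 subset_eq)
  obtain u where u: "u \<in> V" "u \<notin> set ps" using psV assms(7) by auto
  have intO: "{0..card C} \<subseteq> g ` Ou"
  proof
    fix c assume "c \<in> {0..card C}"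
    then have "c \<le> cc k" using cck by auto
    then obtain p where p: "p \<le> k" "cc p = c" using ivt[of cc k c] cc0 ccSuc by fastforce
    have "ps!p \<in> V" using psV lenps p by auto
    then obtain pth where pth: "is_path V ET pth" "hd pth = ps!p" "last pth = u"
      using conn u unfolding connected_graph_def by blast
    define SS where "SS = {v. \<exists>q\<le>k. v = ps!q \<and> cc q = c}"
    have "hd pth \<in> SS" using pth p SS_def by auto
    moreover have "last pth \<notin> SS" using pth u lenps unfolding SS_def by auto
    ultimately obtain a b where ab: "a \<in> SS" "b \<notin> SS" "{a,b} \<in> path_edges pth"
      using crossing[of pth SS] pth(1) unfolding is_path_def by blast
    have abET: "{a,b} \<in> ET" using ab(3) pth(1) unfolding is_path_def by auto
    obtain q where q: "q \<le> k" "a = ps!q" "cc q = c" using ab(1) SS_def by auto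
    have bnot: "b \<notin> set ps"
    proof
      assume "b \<in> set ps"
      then obtain q' where q': "q' < length ps" "b = ps!q'" by (auto simp: in_set_conv_nth)
      then have "cc q' = c" using F1[of q q'] q abET lenps by auto
      then show False using ab(2) q' lenps SS_def by auto
    qed
    have "b \<in> NB" using inNB[of a b] q abET ETE lenps by auto
    then have bO: "b \<in> Ou" using bnot Ou_def by auto
    have bE: "{b, ps!q} \<in> E" using abET ETE q by (auto simp: insert_commute)
    have "\<exists>q. q \<le> k \<and> {b, ps!q} \<in> E" using bE q by auto
    then have "(SOME q. q \<le> k \<and> {b, ps!q} \<in> E) \<le> k \<and> {b, ps!(SOME q. q \<le> k \<and> {b, ps!q} \<in> E)} \<in> E"
      by (rule someI_ex)
    then have "g b = c" unfolding g_def using F2s[of _ q b] q bnot bE by auto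
    then show "c \<in> g ` Ou" using bO by blast
  qed
  have cardC: "Suc (card C) \<le> card Ou"
    using card_mono[OF finite_imageI[OF finO] intO] card_image_le[OF finO, of g] by simp
  have cardNB: "card NB = Suc k + card Ou"
  proof -
    have "card Ou = card NB - card (set ps)" unfolding Ou_def using card_Diff_subset psNB by blast
    moreover have "card (set ps) \<le> card NB" using card_mono[OF finNB psNB] .
    moreover have "card (set ps) = Suc k" using distinct_card[OF dps] lenps by simp
    ultimately show ?thesis by linarith
  qed
  have pt: "we t \<le> 3 + (if t \<in> C then 2 else 0) + (if t \<in> Lk then 1 else 0)" if "t < k" for t
    using we345[OF that] F3[OF that] that unfolding C_def Lk_def by auto
  have "l \<le> (\<Sum>t<k. 3 + (if t \<in> C then 2 else 0) + (if t \<in> Lk then 1 else (0::nat)))"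
    unfolding lsum by (rule sum_mono) (use pt in auto)
  also have "\<dots> = 3 * k + (\<Sum>t<k. (if t \<in> C then 2 else 0)) + (\<Sum>t<k. (if t \<in> Lk then 1 else (0::nat)))"
    by (simp add: sum.distrib)
  also have "(\<Sum>t<k. (if t \<in> C then 2 else (0::nat))) = 2 * card C"
  proof -
    have "(\<Sum>t<k. (if t \<in> C then 2 else (0::nat))) = (\<Sum>t\<in>{..<k} \<inter> C. 2)" using sum.inter_restrict[of "{..<k}" "\<lambda>_. (2::nat)" C] by simp
    also have "{..<k} \<inter> C = C" unfolding C_def by auto
    finally show ?thesis by simp
  qed
  also have "(\<Sum>t<k. (if t \<in> Lk then 1 else (0::nat))) = card Lk"
  proof -
    have "(\<Sum>t<k. (if t \<in> Lk then 1 else (0::nat))) = (\<Sum>t\<in>{..<k} \<inter> Lk. 1)" using sum.inter_restrict[of "{..<k}" "\<lambda>_. (1::nat)" Lk] by simp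
    also have "{..<k} \<inter> Lk = Lk" unfolding Lk_def by auto
    finally show ?thesis by simp
  qed
  finally have lb: "l \<le> 3 * k + 2 * card C + card Lk" .
  have "l + 5 \<le> 3 * card NB" using lb cardNB cardC cardLk by linarith
  then have "real (l + 5) \<le> real (3 * card NB)" by (simp only: of_nat_le_iff)
  then show ?thesis unfolding NB_def by simp
qed

end
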